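(* Let $r$ be the stochastic relative degree of system $(\Sigma_0)$ at $\bar x$. Then, for all $x$ in a neighbourhood of $\bar x$, $$\mathcal S^k_{f,l}h(x)=L^k_{f_S}h(x)\qquad\text{for all }k\in\{0,\dots,r-1\},$$ where $f_S(x)=f(x)-\frac12\frac{\partial l}{\partial x}(x)l(x)$.
   Context: System $(\Sigma_0)$: $dx_t=(f(x_t)+g(x_t)u)dt+l(x_t)d\mathcal W_t$, $y_t=h(x_t)$ (Itô sense), equivalently $\dot x_t=f(x_t)+g(x_t)u+l(x_t)\xi_t$ with $\xi_t$ white noise, $x\in\mathbb R^n$, $f,g,l:\mathbb R^n\to\mathbb R^n$, $h:\mathbb R^n\to\mathbb R$ smooth. Notation: $L_fh=\frac{\partial h}{\partial x}f$, $L^k_f h=L_fL_f^{k-1}h$, $L^0_fh=h$; $H_{l,l}h=l^\top\frac{\partial^2h}{\partial x^2}l$; $\mathcal S_{f,l}h(\xi,x)=L_fh(x)+L_lh(x)\xi+\frac12H_{l,l}h(x)$, iterated as $\mathcal S^k_{f,l}h=\mathcal S_{f,l}\mathcal S^{k-1}_{f,l}h$ whenever $\mathcal S^{k-1}_{f,l}h$ is independent of $\xi$, $\mathcal S^0_{f,l}h=h$. Stochastic relative degree $r$ at $\bar x$ for $(\Sigma_0)$: (ND) $L_l\mathcal S^k_{f,l}h(x)=0$ for all $x$ near $\bar x$ and $k\in\{0,\dots,r-2\}$; (CD) $L_g\mathcal S^k_{f,l}h(x)=0$ for all $x$ near $\bar x$ and $k\in\{0,\dots,r-2\}$; (RD)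 $L_g\mathcal S^{r-1}_{f,l}h(\bar x)\neq0$. *)

theory Defs
  imports "HOL-Analysis.Analysis"
begin

definition dirD :: "('a::real_normed_vector \<Rightarrow> 'b::real_normed_vector) \<Rightarrow> 'a \<Rightarrow> 'a \<Rightarrow> 'b" where
  "dirD F v x = frechet_derivative F (at x) v"

fun iter_dirD :: "'a::real_normed_vector list \<Rightarrow> ('a \<Rightarrow> 'b::real_normed_vector) \<Rightarrow> 'a \<Rightarrow> 'b" where
  "iter_dirD [] F = F"
| "iter_dirD (v # vs) F = dirD (iter_dirD vs F) v"

definition smooth :: "('a::real_normed_vector \<Rightarrow> 'b::real_normed_vector) \<Rightarrow> bool" where
  "smooth F \<longleftrightarrow> (\<forall>vs x. iter_dirD vs F differentiable (at x))"

definition Lie :: "('a::real_normed_vector \<Rightarrow> 'a) \<Rightarrow> ('a \<Rightarrow> real) \<Rightarrow> 'a \<Rightarrow> real" where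
  "Lie f h x = frechet_derivative h (at x) (f x)"

definition Lie_iter :: "nat \<Rightarrow> ('a::real_normed_vector \<Rightarrow> 'a) \<Rightarrow> ('a \<Rightarrow> real) \<Rightarrow> 'a \<Rightarrow> real" where
  "Lie_iter k f h = (Lie f ^^ k) h"

text \<open>H_{l,l} h (x) = l(x)^T (d^2 h/dx^2)(x) l(x).\<close>
definition Hess :: "('a::real_normed_vector \<Rightarrow> 'a) \<Rightarrow> ('a \<Rightarrow> real) \<Rightarrow> 'a \<Rightarrow> real" where
  "Hess l h x = frechet_derivative (\<lambda>y. frechet_derivative h (at y) (l x)) (at x) (l x)"

definition Sop :: "('a::real_normed_vector \<Rightarrow> 'a) \<Rightarrow> ('a \<Rightarrow> 'a) \<Rightarrow> ('a \<Rightarrow> real) \<Rightarrow> real \<Rightarrow> 'a \<Rightarrow> real" where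
  "Sop f l h \<xi> x = Lie f h x + Lie l h x * \<xi> + (1/2) * Hess l h x"

text \<open>The paper only defines S^k when
  S^{k-1} is independent of xi; in that case evaluating S^{k-1} at xi = 0 gives that
  xi-free function, so this agrees with the paper wherever the paper's iterate is defined.\<close>
fun Siter :: "nat \<Rightarrow> ('a::real_normed_vector \<Rightarrow> 'a) \<Rightarrow> ('a \<Rightarrow> 'a) \<Rightarrow> ('a \<Rightarrow> real) \<Rightarrow> real \<Rightarrow> 'a \<Rightarrow> real" where
  "Siter 0 f l h = (\<lambda>\<xi> x. h x)"
| "Siter (Suc k) f l h = Sop f l (\<lambda>x. Siter k f l h 0 x)"

definition stoch_rel_deg ::
  "('a::real_normed_vector \<Rightarrow> 'a) \<Rightarrow> ('a \<Rightarrow> 'a) \<Rightarrow> ('a \<Rightarrow> 'a) \<Rightarrow> ('a \<Rightarrow> real) \<Rightarrow> nat \<Rightarrow> 'a \<Rightarrow> bool" where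
  "stoch_rel_deg f g l h r xbar \<longleftrightarrow> r \<ge> 1
     \<and> (\<forall>\<^sub>F x in nhds xbar. \<forall>k. k + 2 \<le> r \<longrightarrow> Lie l (\<lambda>y. Siter k f l h 0 y) x = 0)
     \<and> (\<forall>\<^sub>F x in nhds xbar. \<forall>k. k + 2 \<le> r \<longrightarrow> Lie g (\<lambda>y. Siter k f l h 0 y) x = 0)
     \<and> Lie g (\<lambda>y. Siter (r - 1) f l h 0 y) xbar \<noteq> 0"

end

theory Submission
  imports Defs
begin

lemma smooth_diff: "smooth F \<Longrightarrow> F differentiable (at x)"
  unfolding smooth_def by (metis iter_dirD.simps(1))

lemma iter_dirD_append: "iter_dirD vs (dirD F v) = iter_dirD (vs @ [v]) F"
  by (induction vs) auto

lemma smooth_dirD: "smooth F \<Longrightarrow> smooth (dirD F v)"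
  unfolding smooth_def by (simp add: iter_dirD_append)

lemma smooth_coind:
  assumes "\<And>F x. F \<in> K \<Longrightarrow> F differentiable (at x)"
    and "\<And>F v. F \<in> K \<Longrightarrow> dirD F v \<in> K"
    and "F \<in> K"
  shows "smooth F"
proof -
  have "iter_dirD vs F \<in> K" for vs
    by (induction vs) (auto simp: assms)
  then show ?thesis unfolding smooth_def using assms(1) by blast
qed

lemma dirD_const: "dirD (\<lambda>x. c) v = (\<lambda>x. 0)"
  unfolding dirD_def by (rule ext) simp

lemma smooth_const: "smooth (\<lambda>x. c)"
proof -
  have "iter_dirD vs (\<lambda>x. c) = (\<lambda>x. if vs = [] then c else 0)" for vs :: "'a list"
    by (induction vs) (auto simp: dirD_const)
  then show ?thesis unfolding smooth_def by simp
qed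

inductive_set K :: "('a::real_normed_vector \<Rightarrow> real) set" where
  Ks: "smooth F \<Longrightarrow> F \<in> K"
| Kadd: "F \<in> K \<Longrightarrow> G \<in> K \<Longrightarrow> (\<lambda>x. F x + G x) \<in> K"
| Kmult: "F \<in> K \<Longrightarrow> G \<in> K \<Longrightarrow> (\<lambda>x. F x * G x) \<in> K"

lemma K_diff: "F \<in> K \<Longrightarrow> F differentiable (at x)"
  by (induction rule: K.induct) (auto simp: smooth_diff)

lemma dirD_add:
  assumes "\<And>x. F differentiable (at x)" "\<And>x. G differentiable (at x)"
  shows "dirD (\<lambda>x. F x + G x) v = (\<lambda>x. dirD F v x + dirD G v x)"
proof
  fix x
  have "((\<lambda>x. F x + G x) has_derivative (\<lambda>h. frechet_derivative F (at x) h + frechet_derivative G (at x) h)) (at x)"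
    using assms by (intro has_derivative_add) (auto simp: frechet_derivative_works[symmetric])
  from frechet_derivative_at[OF this] show "dirD (\<lambda>x. F x + G x) v x = dirD F v x + dirD G v x"
    unfolding dirD_def by metis
qed

lemma dirD_mult:
  fixes F G :: "'a::real_normed_vector \<Rightarrow> real"
  assumes "\<And>x. F differentiable (at x)" "\<And>x. G differentiable (at x)"
  shows "dirD (\<lambda>x. F x * G x) v = (\<lambda>x. F x * dirD G v x + dirD F v x * G x)"
proof
  fix x
  have "((\<lambda>x. F x * G x) has_derivative (\<lambda>h. F x * frechet_derivative G (at x) h + frechet_derivative F (at x) h * G x)) (at x)"
  proof -
    have a: "(F has_derivative frechet_derivative F (at x)) (at x)" using assms(1) frechet_derivative_works by blast
    have b: "(G has_derivative frechet_derivative G (at x)) (at x)" using assms(2) frechet_derivative_works by blast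
    show ?thesis using has_derivative_mult[OF a b] by simp
  qed
  from frechet_derivative_at[OF this] show "dirD (\<lambda>x. F x * G x) v x = F x * dirD G v x + dirD F v x * G x"
    unfolding dirD_def by metis
qed

lemma K_dirD: "F \<in> K \<Longrightarrow> dirD F v \<in> K"
proof (induction rule: K.induct)
  case (Ks F) then show ?case by (auto intro: K.Ks smooth_dirD)
next
  case (Kadd F G) then show ?case by (simp add: dirD_add K_diff K.Kadd)
next
  case (Kmult F G) then show ?case by (simp add: dirD_mult K_diff K.Kadd K.Kmult)
qed

lemma K_smooth: "F \<in> K \<Longrightarrow> smooth F"
  by (rule smooth_coind[of K]) (auto simp: K_diff K_dirD)

lemma K_const: "(\<lambda>x. c) \<in> K"
  by (rule K.Ks[OF smooth_const])

lemma K_sum: "finite A \<Longrightarrow> (\<And>i. i \<in> A \<Longrightarrow> F i \<in> K) \<Longrightarrow> (\<lambda>x. \<Sum>i\<in>A. F i x) \<in> K"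
proof (induction A rule: finite_induct)
  case empty then show ?case using K_const[of 0] by simp
next
  case (insert a A) then show ?case using K.Kadd[of "F a" "\<lambda>x. \<Sum>i\<in>A. F i x"] by simp
qed

lemma dirD_inner:
  assumes "\<And>x. G differentiable (at x)"
  shows "dirD (\<lambda>x. G x \<bullet> i) v = (\<lambda>x. dirD G v x \<bullet> i)"
proof
  fix x
  have "((\<lambda>x. G x \<bullet> i) has_derivative (\<lambda>h. frechet_derivative G (at x) h \<bullet> i)) (at x)"
    using assms by (intro has_derivative_inner_left) (auto simp: frechet_derivative_works[symmetric])
  from frechet_derivative_at[OF this] show "dirD (\<lambda>x. G x \<bullet> i) v x = dirD G v x \<bullet> i"
    unfolding dirD_def by metis
qed

lemma smooth_inner:
  assumes "smooth (G::'a::real_normed_vector \<Rightarrow> 'b::real_inner)"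
  shows "smooth (\<lambda>x. G x \<bullet> i)"
proof -
  have "iter_dirD vs (\<lambda>x. G x \<bullet> i) = (\<lambda>x. iter_dirD vs G x \<bullet> i)" for vs
  proof (induction vs)
    case (Cons v vs)
    have "\<And>x. iter_dirD vs G differentiable (at x)" using assms unfolding smooth_def by blast
    then show ?case using Cons by (simp add: dirD_inner)
  qed simp
  then show ?thesis using assms unfolding smooth_def by simp
qed

lemma fd_expand:
  fixes \<phi> :: "'a::euclidean_space \<Rightarrow> real"
  assumes "\<phi> differentiable (at x)"
  shows "frechet_derivative \<phi> (at x) w = (\<Sum>i\<in>Basis. (w \<bullet> i) * dirD \<phi> i x)"
proof -
  have "linear (frechet_derivative \<phi> (at x))"
    using frechet_derivative_works[THEN iffD1, OF assms] by (rule has_derivative_linear)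
  then have "frechet_derivative \<phi> (at x) (\<Sum>i\<in>Basis. (w \<bullet> i) *\<^sub>R i) = (\<Sum>i\<in>Basis. (w \<bullet> i) * dirD \<phi> i x)"
    by (simp add: linear_sum linear_scale dirD_def comp_def)
  then show ?thesis by (simp add: euclidean_representation)
qed

lemma Lie_expand:
  fixes \<phi> :: "'a::euclidean_space \<Rightarrow> real"
  assumes "\<phi> differentiable (at x)"
  shows "Lie v \<phi> x = (\<Sum>i\<in>Basis. (v x \<bullet> i) * dirD \<phi> i x)"
  unfolding Lie_def by (rule fd_expand[OF assms])

lemma Lie_K:
  fixes \<phi> :: "'a::euclidean_space \<Rightarrow> real"
  assumes "\<phi> \<in> K" "smooth v"
  shows "Lie v \<phi> \<in> K"
proof -
  have "Lie v \<phi> = (\<lambda>x. \<Sum>i\<in>Basis. (v x \<bullet> i) * dirD \<phi> i x)"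
    by (rule ext, rule Lie_expand, rule K_diff[OF assms(1)])
  moreover have "(\<lambda>x. \<Sum>i\<in>Basis. (v x \<bullet> i) * dirD \<phi> i x) \<in> K"
    by (rule K_sum) (auto intro!: K.Kmult[OF K.Ks[OF smooth_inner[OF assms(2)]] K_dirD[OF assms(1)]])
  ultimately show ?thesis by simp
qed

lemma Hess_expand:
  fixes \<phi> :: "'a::euclidean_space \<Rightarrow> real"
  assumes "\<And>y. \<phi> differentiable (at y)" "\<And>i. dirD \<phi> i differentiable (at x)"
  shows "Hess l \<phi> x = (\<Sum>i\<in>Basis. (l x \<bullet> i) * Lie l (dirD \<phi> i) x)"
proof -
  have eq: "(\<lambda>y. frechet_derivative \<phi> (at y) (l x)) = (\<lambda>y. \<Sum>i\<in>Basis. (l x \<bullet> i) * dirD \<phi> i y)"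
    by (rule ext, rule fd_expand[OF assms(1)])
  have hd: "((\<lambda>y. \<Sum>i\<in>Basis. (l x \<bullet> i) * dirD \<phi> i y) has_derivative
        (\<lambda>h. \<Sum>i\<in>Basis. (l x \<bullet> i) * frechet_derivative (dirD \<phi> i) (at x) h)) (at x)"
    using assms(2) by (intro has_derivative_sum has_derivative_mult_right)
      (auto simp: frechet_derivative_works[symmetric])
  show ?thesis
    unfolding Hess_def eq Lie_def frechet_derivative_at[OF hd, symmetric] by simp
qed

lemma Hess_K:
  fixes \<phi> :: "'a::euclidean_space \<Rightarrow> real"
  assumes "\<phi> \<in> K" "smooth l"
  shows "Hess l \<phi> \<in> K"
proof -
  have "Hess l \<phi> = (\<lambda>x. \<Sum>i\<in>Basis. (l x \<bullet> i) * Lie l (dirD \<phi> i) x)"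
    by (rule ext, rule Hess_expand, rule K_diff[OF assms(1)], rule K_diff[OF K_dirD[OF assms(1)]])
  moreover have "(\<lambda>x. \<Sum>i\<in>Basis. (l x \<bullet> i) * Lie l (dirD \<phi> i) x) \<in> K"
    by (rule K_sum) (auto intro!: K.Kmult[OF K.Ks[OF smooth_inner[OF assms(2)]] Lie_K[OF K_dirD[OF assms(1)] assms(2)]])
  ultimately show ?thesis by simp
qed

lemma key_zero:
  fixes \<phi> :: "'a::euclidean_space \<Rightarrow> real" and l :: "'a \<Rightarrow> 'a"
  assumes "\<phi> \<in> K" "smooth l" "open U" "x \<in> U" "\<And>y. y \<in> U \<Longrightarrow> Lie l \<phi> y = 0"
  shows "Hess l \<phi> x + Lie (\<lambda>y. frechet_derivative l (at y) (l y)) \<phi> x = 0"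
proof -
  have dphi: "\<And>y. \<phi> differentiable (at y)" by (rule K_diff[OF assms(1)])
  have ddphi: "\<And>i y. dirD \<phi> i differentiable (at y)" by (rule K_diff[OF K_dirD[OF assms(1)]])
  have dl: "(l has_derivative frechet_derivative l (at x)) (at x)"
    using smooth_diff[OF assms(2)] frechet_derivative_works by blast
  define G' where "G' = (\<lambda>h. \<Sum>i\<in>Basis. ((frechet_derivative l (at x) h \<bullet> i) * dirD \<phi> i x
        + (l x \<bullet> i) * frechet_derivative (dirD \<phi> i) (at x) h))"
  have dG: "((\<lambda>y. \<Sum>i\<in>Basis. (l y \<bullet> i) * dirD \<phi> i y) has_derivative G') (at x)"
    unfolding G'_def
  proof (intro has_derivative_sum)
    fix i :: 'a
    have a: "((\<lambda>y. l y \<bullet> i) has_derivative (\<lambda>h. frechet_derivative l (at x) h \<bullet> i)) (at x)"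
      by (intro has_derivative_inner_left dl)
    have b: "(dirD \<phi> i has_derivative frechet_derivative (dirD \<phi> i) (at x)) (at x)"
      using ddphi frechet_derivative_works by blast
    show "((\<lambda>y. (l y \<bullet> i) * dirD \<phi> i y) has_derivative
          (\<lambda>h. (frechet_derivative l (at x) h \<bullet> i) * dirD \<phi> i x + (l x \<bullet> i) * frechet_derivative (dirD \<phi> i) (at x) h)) (at x)"
      using has_derivative_mult[OF a b] by (simp add: add.commute)
  qed
  have z: "\<And>y. y \<in> U \<Longrightarrow> (\<Sum>i\<in>Basis. (l y \<bullet> i) * dirD \<phi> i y) = 0"
  proof -
    fix y assume "y \<in> U"
    then have "Lie l \<phi> y = 0" by (rule assms(5))
    then show "(\<Sum>i\<in>Basis. (l y \<bullet> i) * dirD \<phi> i y) = 0" by (simp only: Lie_expand[OF dphi])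
  qed
  have "((\<lambda>y. 0::real) has_derivative G') (at x)"
    by (rule has_derivative_transform_within_open[OF dG assms(3) assms(4)]) (rule z)
  then have "G' = (\<lambda>h. 0)" by (rule has_derivative_unique[OF _ has_derivative_const])
  then have "G' (l x) = 0" by simp
  moreover have "G' (l x) = Lie (\<lambda>y. frechet_derivative l (at y) (l y)) \<phi> x + Hess l \<phi> x"
    unfolding G'_def sum.distrib Lie_expand[OF dphi] Hess_expand[OF dphi ddphi]
    by (simp add: Lie_def dirD_def)
  ultimately show ?thesis by simp
qed

lemma Sop_step:
  fixes \<phi> :: "'a::euclidean_space \<Rightarrow> real" and l f :: "'a \<Rightarrow> 'a"
  assumes "\<phi> \<in> K" "smooth l" "open U" "x \<in> U" "\<And>y. y \<in> U \<Longrightarrow> Lie l \<phi> y = 0"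
  shows "Sop f l \<phi> \<xi> x = Lie (\<lambda>y. f y - (1/2) *\<^sub>R frechet_derivative l (at y) (l y)) \<phi> x"
proof -
  have z: "Hess l \<phi> x + Lie (\<lambda>y. frechet_derivative l (at y) (l y)) \<phi> x = 0"
    by (rule key_zero[OF assms])
  have lin: "linear (frechet_derivative \<phi> (at x))"
    using frechet_derivative_works[THEN iffD1, OF K_diff[OF assms(1)]] by (rule has_derivative_linear)
  have "Lie (\<lambda>y. f y - (1/2) *\<^sub>R frechet_derivative l (at y) (l y)) \<phi> x
      = Lie f \<phi> x - (1/2) * Lie (\<lambda>y. frechet_derivative l (at y) (l y)) \<phi> x"
    unfolding Lie_def using lin by (simp add: linear_diff linear_scale)
  moreover have "Sop f l \<phi> \<xi> x = Lie f \<phi> x + (1/2) * Hess l \<phi> x"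
    unfolding Sop_def using assms(5)[OF assms(4)] by simp
  ultimately show ?thesis using z by simp
qed

lemma Lie_local:
  assumes "\<phi> differentiable (at x)" "open U" "x \<in> U" "\<And>y. y \<in> U \<Longrightarrow> \<phi> y = \<psi> y"
  shows "Lie v \<phi> x = Lie v \<psi> x"
proof -
  have d: "(\<phi> has_derivative frechet_derivative \<phi> (at x)) (at x)"
    using frechet_derivative_works assms(1) by blast
  have "(\<psi> has_derivative frechet_derivative \<phi> (at x)) (at x)"
    by (rule has_derivative_transform_within_open[OF d assms(2) assms(3)]) (rule assms(4))
  from frechet_derivative_at[OF this] show ?thesis unfolding Lie_def by simp
qed

lemma Siter_K:
  fixes f l :: "'a::euclidean_space \<Rightarrow> 'a"
  assumes "smooth f" "smooth l" "smooth h"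
  shows "(\<lambda>x. Siter k f l h 0 x) \<in> K"
proof (induction k)
  case 0 then show ?case using K.Ks[OF assms(3)] by simp
next
  case (Suc k)
  define \<phi> where "\<phi> = (\<lambda>x. Siter k f l h 0 x)"
  have "(\<lambda>x. Siter (Suc k) f l h 0 x) = (\<lambda>x. Lie f \<phi> x + (\<lambda>x. 1/2) x * Hess l \<phi> x)"
    by (simp add: Sop_def \<phi>_def)
  moreover have "(\<lambda>x. Lie f \<phi> x + (\<lambda>x. 1/2) x * Hess l \<phi> x) \<in> K"
    using Suc unfolding \<phi>_def[symmetric]
    by (intro K.Kadd[OF Lie_K[OF _ assms(1)] K.Kmult[OF K_const Hess_K[OF _ assms(2)]]])
  ultimately show ?case by simp
qed

theorem lemma1:
  fixes f g l :: "'a::euclidean_space \<Rightarrow> 'a" and h :: "'a \<Rightarrow> real" and xbar :: 'a and r :: nat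
  assumes "smooth f" and "smooth g" and "smooth l" and "smooth h"
    and "stoch_rel_deg f g l h r xbar"
  shows "\<forall>\<^sub>F x in nhds xbar. \<forall>k. k \<le> r - 1 \<longrightarrow> (\<forall>\<xi>.
           Siter k f l h \<xi> x
             = Lie_iter k (\<lambda>y. f y - (1/2) *\<^sub>R frechet_derivative l (at y) (l y)) h x)"
proof -
  define fS where "fS = (\<lambda>y. f y - (1/2) *\<^sub>R frechet_derivative l (at y) (l y))"
  have ND: "\<forall>\<^sub>F x in nhds xbar. \<forall>k. k + 2 \<le> r \<longrightarrow> Lie l (\<lambda>y. Siter k f l h 0 y) x = 0"
    using assms(5) unfolding stoch_rel_deg_def by blast
  have P: "k \<le> r - 1 \<Longrightarrow> \<forall>\<^sub>F x in nhds xbar. \<forall>\<xi>. Siter k f l h \<xi> x = Lie_iter k fS h x" for k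
  proof (induction k)
    case 0 then show ?case by (simp add: Lie_iter_def)
  next
    case (Suc k)
    then have "k \<le> r - 1" "k + 2 \<le> r" by auto
    have "\<forall>\<^sub>F x in nhds xbar. (\<forall>\<xi>. Siter k f l h \<xi> x = Lie_iter k fS h x)
        \<and> (\<forall>k. k + 2 \<le> r \<longrightarrow> Lie l (\<lambda>y. Siter k f l h 0 y) x = 0)"
      using Suc.IH[OF \<open>k \<le> r - 1\<close>] ND by (rule eventually_conj)
    then obtain S where S: "open S" "xbar \<in> S"
      "\<And>x. x \<in> S \<Longrightarrow> (\<forall>\<xi>. Siter k f l h \<xi> x = Lie_iter k fS h x)
        \<and> (\<forall>k. k + 2 \<le> r \<longrightarrow> Lie l (\<lambda>y. Siter k f l h 0 y) x = 0)"
      unfolding eventually_nhds by blast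
    have "\<forall>\<xi>. Siter (Suc k) f l h \<xi> x = Lie_iter (Suc k) fS h x" if "x \<in> S" for x
    proof
      fix \<xi>
      define \<phi> where "\<phi> = (\<lambda>x. Siter k f l h 0 x)"
      have phiK: "\<phi> \<in> K" unfolding \<phi>_def by (rule Siter_K[OF assms(1,3,4)])
      have "Siter (Suc k) f l h \<xi> x = Sop f l \<phi> \<xi> x" by (simp add: \<phi>_def)
      also have "\<dots> = Lie fS \<phi> x" unfolding fS_def
        by (rule Sop_step[OF phiK assms(3) S(1) that]) (use S(3) \<open>k + 2 \<le> r\<close> \<phi>_def in blast)
      also have "\<dots> = Lie fS (Lie_iter k fS h) x"
        by (rule Lie_local[OF K_diff[OF phiK] S(1) that]) (use S(3) \<phi>_def in blast)
      also have "\<dots> = Lie_iter (Suc k) fS h x" by (simp add: Lie_iter_def)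
      finally show "Siter (Suc k) f l h \<xi> x = Lie_iter (Suc k) fS h x" .
    qed
    then show ?case unfolding eventually_nhds using S(1,2) by blast
  qed
  have "\<forall>\<^sub>F x in nhds xbar. \<forall>k\<in>{..r-1}. \<forall>\<xi>. Siter k f l h \<xi> x = Lie_iter k fS h x"
    by (rule eventually_ball_finite) (auto intro: P)
  then show ?thesis unfolding fS_def[symmetric] by (rule eventually_mono) auto
qed

end
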